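(* Let $N\ge1$ and $\varphi,\psi\in\mathbb{C}^N$ be such that for $k=0,\ldots,2N-2$, $$\Big|P_\varphi\Big(\tfrac{k}{2N-1}\Big)\Big|=\Big|P_\psi\Big(\tfrac{k}{2N-1}\Big)\Big|\quad\text{and}\quad\Big|P_\varphi'\Big(\tfrac{k}{2N-1}\Big)\Big|=\Big|P_\psi'\Big(\tfrac{k}{2N-1}\Big)\Big|.$$ Then there exists $\lambda\in\mathbb{C}$ with $|\lambda|=1$ such that $\psi=\lambda\varphi$.
   Context: For $\psi=(\psi_0,\ldots,\psi_{N-1})\in\mathbb{C}^N$, $P_\psi(x)=\sum_{j=0}^{N-1}\psi_je^{2i\pi jx}$ for $x\in\mathbb{R}$, and $P_\psi'$ denotes its derivative in $x$. *)

theory Defs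
  imports "HOL-Analysis.Analysis"
begin

text \<open>Vectors in C^N are represented as functions nat => complex; only the
entries with index j < N matter.  P N psi x = sum_{j<N} psi_j e^{2 i pi j x}.\<close>

definition trigP :: "nat \<Rightarrow> (nat \<Rightarrow> complex) \<Rightarrow> real \<Rightarrow> complex" where
  "trigP N \<psi> x = (\<Sum>j<N. \<psi> j * exp (2 * \<i> * of_real pi * of_nat j * of_real x))"

definition trigP' :: "nat \<Rightarrow> (nat \<Rightarrow> complex) \<Rightarrow> real \<Rightarrow> complex" where
  "trigP' N \<psi> x = vector_derivative (trigP N \<psi>) (at x)"

end

theory Submission imports Defs "HOL-Computational_Algebra.Polynomial" begin

definition PP :: "nat \<Rightarrow> (nat \<Rightarrow> complex) \<Rightarrow> complex poly" where
  "PP N f = (\<Sum>j<N. monom (f j) j)"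

definition TT :: "nat \<Rightarrow> complex poly \<Rightarrow> complex poly" where
  "TT K f = (\<Sum>j\<le>K. monom (cnj (coeff f j)) (K - j))"

lemma coeff_PP: "coeff (PP N f) i = (if i < N then f i else 0)"
  unfolding PP_def coeff_sum coeff_monom by (auto simp: sum.delta)

lemma degree_PP: "degree (PP N f) \<le> N - 1"
  by (rule degree_le) (auto simp: coeff_PP)

lemma coeff_TT: "coeff (TT K f) i = (if i \<le> K then cnj (coeff f (K - i)) else 0)"
proof -
  have "coeff (TT K f) i = (\<Sum>j\<le>K. if K - j = i then cnj (coeff f j) else 0)"
    unfolding TT_def coeff_sum coeff_monom by simp
  also have "\<dots> = (\<Sum>j\<le>K. if j = K - i \<and> i \<le> K then cnj (coeff f j) else 0)"
    by (rule sum.cong) auto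
  also have "\<dots> = (if i \<le> K then cnj (coeff f (K - i)) else 0)"
    by (cases "i \<le> K") (auto simp: sum.delta)
  finally show ?thesis .
qed

lemma degree_TT: "degree (TT K f) \<le> K"
  by (rule degree_le) (auto simp: coeff_TT)

lemma TT_smult: "TT K (smult c f) = smult (cnj c) (TT K f)"
  by (rule poly_eqI) (simp add: coeff_TT)

lemma TT_eq_0: "degree f \<le> K \<Longrightarrow> TT K f = 0 \<Longrightarrow> f = 0"
proof (rule poly_eqI)
  fix n assume d: "degree f \<le> K" and z: "TT K f = 0"
  show "coeff f n = coeff 0 n"
  proof (cases "n \<le> K")
    case True
    have "coeff (TT K f) (K - n) = 0" using z by simp
    then show ?thesis using True by (simp add: coeff_TT)
  next
    case False then show ?thesis using d by (simp add: coeff_eq_0)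
  qed
qed

lemma poly_TT:
  assumes "degree f \<le> K" "cmod w = 1"
  shows "poly (TT K f) w = w ^ K * cnj (poly f w)"
proof -
  have ww: "w * cnj w = 1" using assms(2) complex_norm_square[of w] by simp
  have pf: "poly f w = (\<Sum>j\<le>K. coeff f j * w ^ j)"
    unfolding poly_altdef
    by (rule sum.mono_neutral_left) (use assms(1) in \<open>auto simp: coeff_eq_0\<close>)
  have "poly (TT K f) w = (\<Sum>j\<le>K. cnj (coeff f j) * w ^ (K - j))"
    unfolding TT_def poly_sum poly_monom by simp
  also have "\<dots> = (\<Sum>j\<le>K. w ^ K * (cnj (coeff f j) * cnj w ^ j))"
  proof (rule sum.cong)
    fix j assume "j \<in> {..K}"
    then have "w ^ K = w ^ (K - j) * w ^ j" by (simp add: power_add[symmetric])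
    then have "w ^ K * cnj w ^ j = w ^ (K - j) * (w * cnj w) ^ j" by (simp add: power_mult_distrib)
    then show "cnj (coeff f j) * w ^ (K - j) = w ^ K * (cnj (coeff f j) * cnj w ^ j)"
      using ww by (simp add: algebra_simps)
  qed simp
  also have "\<dots> = w ^ K * cnj (poly f w)"
    by (simp add: pf sum_distrib_left)
  finally show ?thesis .
qed


lemma wr_degree:
  fixes f g :: "complex poly"
  assumes f: "f \<noteq> 0" and g: "g \<noteq> 0" and w: "pderiv f * g = f * pderiv g"
  shows "degree f = degree g"
proof (cases "degree f = 0 \<or> degree g = 0")
  case True
  then show ?thesis
  proof
    assume "degree f = 0"
    then have "pderiv f = 0" by (simp add: pderiv_eq_0_iff)
    then have "pderiv g = 0" using w f by simp
    then show ?thesis using \<open>degree f = 0\<close> by (simp add: pderiv_eq_0_iff)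
  next
    assume "degree g = 0"
    then have "pderiv g = 0" by (simp add: pderiv_eq_0_iff)
    then have "pderiv f = 0" using w g by simp
    then show ?thesis using \<open>degree g = 0\<close> by (simp add: pderiv_eq_0_iff)
  qed
next
  case False
  have lf: "lead_coeff (pderiv f) = of_nat (degree f) * lead_coeff f"
    using False by (simp add: degree_pderiv coeff_pderiv)
  have lg: "lead_coeff (pderiv g) = of_nat (degree g) * lead_coeff g"
    using False by (simp add: degree_pderiv coeff_pderiv)
  have "lead_coeff (pderiv f * g) = lead_coeff (f * pderiv g)" using w by simp
  then have "of_nat (degree f) * lead_coeff f * lead_coeff g = lead_coeff f * (of_nat (degree g) * lead_coeff g)"
    by (simp only: lead_coeff_mult lf lg)
  then have "(of_nat (degree f) :: complex) = of_nat (degree g)"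
    using f g by (simp add: algebra_simps)
  then show ?thesis by simp
qed

lemma wronskian:
  fixes f g :: "complex poly"
  assumes f: "f \<noteq> 0" and g: "g \<noteq> 0" and w: "pderiv f * g = f * pderiv g"
  shows "\<exists>c. g = smult c f"
proof -
  define c where "c = lead_coeff g / lead_coeff f"
  define t where "t = g - smult c f"
  have dg: "degree g = degree f" using wr_degree[OF f g w] by simp
  have ct: "coeff t (degree f) = 0"
    using f dg by (simp add: t_def c_def)
  have wt: "pderiv f * t = f * pderiv t"
    using w by (simp add: t_def pderiv_diff pderiv_smult algebra_simps)
  have "t = 0"
  proof (rule ccontr)
    assume "t \<noteq> 0"
    then have "degree f = degree t" using wr_degree[OF f _ wt] by simp
    then have "lead_coeff t = 0" using ct by simp
    then show False using \<open>t \<noteq> 0\<close> by simp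
  qed
  then show ?thesis unfolding t_def by auto
qed


lemma coeff_X_pderiv: "coeff (pCons 0 (pderiv p)) i = of_nat i * coeff p i"
  by (cases i) (simp_all add: coeff_pderiv)

lemma PP_deriv: "PP N (\<lambda>j. of_nat j * f j) = pCons 0 (pderiv (PP N f))"
  by (rule poly_eqI) (simp add: coeff_X_pderiv coeff_PP)

lemma DT:
  fixes p :: "complex poly"
  shows "pCons 0 (pderiv (TT M p)) = smult (of_nat M) (TT M p) - TT M (pCons 0 (pderiv p))"
proof (rule poly_eqI)
  fix i
  show "coeff (pCons 0 (pderiv (TT M p))) i = coeff (smult (of_nat M) (TT M p) - TT M (pCons 0 (pderiv p))) i"
    unfolding coeff_X_pderiv coeff_diff coeff_smult coeff_TT
    by (auto simp: of_nat_diff algebra_simps)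
qed


lemma pCons0_X: "pCons 0 h = [:0,1:] * (h::complex poly)"
  by simp

lemma smult_m: "smult c h = [:c:] * (h::complex poly)"
  by simp

lemma alg:
  fixes p q :: "complex poly" and M :: nat
  defines "r \<equiv> pCons 0 (pderiv p)" and "s \<equiv> pCons 0 (pderiv q)"
  assumes dp: "degree p \<le> M" and dq: "degree q \<le> M"
    and E1: "p * TT M p = q * TT M q"
    and E2: "r * TT M r = s * TT M s"
  shows "\<exists>c. cmod c = 1 \<and> q = smult c p"
proof (cases "p = 0")
  case True
  then have "q * TT M q = 0" using E1 by simp
  then have "q = 0" using TT_eq_0[OF dq] by auto
  then show ?thesis using True by (intro exI[of _ 1]) simp
next
  case pnz: False
  define X :: "complex poly" where "X = [:0,1:]"
  define m :: "complex poly" where "m = [:of_nat M:]"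
  define Tp where "Tp = TT M p"
  define Tq where "Tq = TT M q"
  define Tr where "Tr = TT M r"
  define Ts where "Ts = TT M s"
  have Xnz: "X \<noteq> 0" by (simp add: X_def)
  have Tpnz: "Tp \<noteq> 0" using TT_eq_0[OF dp] pnz by (auto simp: Tp_def)
  have pTp: "p * Tp \<noteq> 0" using Tpnz pnz by simp
  have qnz: "q \<noteq> 0" using pTp E1 by (auto simp: Tp_def)
  have Tqnz: "Tq \<noteq> 0" using TT_eq_0[OF dq] qnz by (auto simp: Tq_def)
  have r: "r = X * pderiv p" by (simp add: r_def X_def)
  have s: "s = X * pderiv q" by (simp add: s_def X_def)
  have DTp: "X * pderiv Tp = m * Tp - Tr"
    using DT[of M p] by (simp add: Tp_def Tr_def r_def m_def X_def)
  have DTq: "X * pderiv Tq = m * Tq - Ts"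
    using DT[of M q] by (simp add: Tq_def Ts_def s_def m_def X_def)
  have E1': "p * Tp = q * Tq" using E1 by (simp add: Tp_def Tq_def)
  have E2': "r * Tr = s * Ts" using E2 by (simp add: Tr_def Ts_def)
  have "X * pderiv (p * Tp) = X * pderiv (q * Tq)" using E1' by simp
  then have "p * (X * pderiv Tp) + Tp * (X * pderiv p) = q * (X * pderiv Tq) + Tq * (X * pderiv q)"
    by (simp add: pderiv_mult algebra_simps)
  then have "p * (m * Tp - Tr) + Tp * r = q * (m * Tq - Ts) + Tq * s"
    by (simp only: DTp DTq r s)
  then have E3: "r * Tp - p * Tr = s * Tq - q * Ts"
    using E1' by algebra
  have "(r * Tp + p * Tr - (s * Tq + q * Ts)) * (r * Tp + p * Tr + (s * Tq + q * Ts)) = 0"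
    using E1' E2' E3 by algebra
  then have "r * Tp + p * Tr = s * Tq + q * Ts \<or> r * Tp + p * Tr = - (s * Tq + q * Ts)"
    by (simp only: mult_eq_0_iff right_minus_eq eq_neg_iff_add_eq_0)
  then have "\<exists>c. q = smult c p"
  proof
    assume "r * Tp + p * Tr = s * Tq + q * Ts"
    then have "r * Tp = s * Tq" using E3 by algebra
    then have "Tp * (r * q - s * p) = 0" using E1' by algebra
    then have "r * q = s * p" using Tpnz by simp
    then have "X * (pderiv p * q - p * pderiv q) = 0" by (simp add: r s algebra_simps)
    then have "pderiv p * q = p * pderiv q" using Xnz by simp
    then show ?thesis using wronskian[OF pnz qnz] by simp
  next
    assume "r * Tp + p * Tr = - (s * Tq + q * Ts)"
    then have a: "r * Tp = - Ts * q" and b: "Tr * p = - s * Tq" using E3 by algebra+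
    have "p * (Tr * q + s * Tp) = 0" using b E1' by algebra
    then have "Tr * q + s * Tp = 0" using pnz by (simp only: mult_eq_0_iff) simp
    then have d: "Tr * q = - s * Tp" by (simp add: eq_neg_iff_add_eq_0)
    define g where "g = monom 1 M * q"
    have gnz: "g \<noteq> 0" using qnz by (simp add: g_def)
    have Xm: "X * pderiv (monom (1::complex) M) = m * monom 1 M"
      by (cases M) (simp_all add: X_def m_def pderiv_monom monom_Suc[symmetric] smult_monom)
    have "X * pderiv g = monom 1 M * s + q * (m * monom 1 M)"
      by (simp add: g_def pderiv_mult s Xm[symmetric] algebra_simps)
    then have "X * (pderiv Tp * g - Tp * pderiv g) = 0"
      using DTp d by (simp add: g_def algebra_simps) algebra?
    then have W: "pderiv Tp * g = Tp * pderiv g" using Xnz by simp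
    obtain c where gc: "g = smult c Tp" using wronskian[OF Tpnz gnz W] by blast
    have cnz: "c \<noteq> 0" using gc gnz by auto
    have "degree g = M + degree q" using qnz by (simp add: g_def degree_mult_eq degree_monom_eq)
    moreover have "degree g \<le> M" using gc degree_TT[of M p] degree_smult_le[of c Tp]
      by (simp add: Tp_def)
    ultimately have dq0: "degree q = 0" by simp
    have cp: "coeff p j = 0" if "j \<ge> 1" for j
    proof (cases "j \<le> M")
      case True
      have "coeff g (M - j) = 0" using True that by (simp add: g_def coeff_monom_mult)
      then have "c * cnj (coeff p j) = 0" using True by (simp add: gc Tp_def coeff_TT)
      then show ?thesis using cnz by simp
    next
      case False then show ?thesis using dp by (simp add: coeff_eq_0)
    qed
    have dp0: "degree p = 0" by (rule degree_le[of 0, simplified]) (use cp in auto)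
    have p0: "coeff p 0 \<noteq> 0" using pnz dp0 by (metis leading_coeff_0_iff)
    have "q = smult (coeff q 0 / coeff p 0) p"
    proof (rule poly_eqI)
      fix n show "coeff q n = coeff (smult (coeff q 0 / coeff p 0) p) n"
        using p0 dq0 dp0 by (cases n) (auto simp: coeff_eq_0)
    qed
    then show ?thesis by blast
  qed
  then obtain c where c: "q = smult c p" by blast
  have "p * Tp = smult (c * cnj c) (p * Tp)"
    using E1' by (simp add: c Tq_def Tp_def TT_smult mult.commute)
  then have "coeff (p * Tp) (degree (p * Tp)) = c * cnj c * coeff (p * Tp) (degree (p * Tp))"
    by (metis coeff_smult)
  then have "c * cnj c = 1" using pTp by simp
  then have "(cmod c)^2 = 1" using complex_norm_square[of c] by (metis of_real_eq_1_iff)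
  then have "cmod c = 1" using norm_ge_zero[of c] by (auto simp: power2_eq_1_iff)
  then show ?thesis using c by blast
qed


definition ew :: "real \<Rightarrow> complex" where
  "ew x = exp (2 * \<i> * of_real pi * of_real x)"

lemma exp_pow: "exp (2 * \<i> * of_real pi * of_nat j * of_real x) = ew x ^ j"
proof -
  have "2 * \<i> * of_real pi * of_nat j * of_real x = of_nat j * (2 * \<i> * of_real pi * of_real x)"
    by (simp add: algebra_simps)
  then have "exp (2 * \<i> * of_real pi * of_nat j * of_real x) = exp (of_nat j * (2 * \<i> * of_real pi * of_real x))"
    by (simp only:)
  then show ?thesis by (simp only: ew_def exp_of_nat_mult)
qed

lemma trigP_poly: "trigP N f x = poly (PP N f) (ew x)"
  unfolding trigP_def PP_def poly_sum poly_monom exp_pow ..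

lemma trigP'_poly: "trigP' N f x = 2 * \<i> * of_real pi * poly (PP N (\<lambda>j. of_nat j * f j)) (ew x)"
proof -
  define g where "g z = (\<Sum>j<N. f j * exp (2 * \<i> * of_real pi * of_nat j * z))" for z
  have tg: "trigP N f = (\<lambda>x. g (of_real x))"
    by (rule ext) (simp add: trigP_def g_def)
  have "(g has_field_derivative (\<Sum>j<N. f j * (exp (2 * \<i> * of_real pi * of_nat j * z) * (2 * \<i> * of_real pi * of_nat j)))) (at z)" for z
    unfolding g_def by (auto intro!: derivative_eq_intros sum.cong simp: mult_ac)
  then have "(trigP N f has_vector_derivative (\<Sum>j<N. f j * (exp (2 * \<i> * of_real pi * of_nat j * of_real x) * (2 * \<i> * of_real pi * of_nat j)))) (at x)"
    unfolding tg by (rule has_vector_derivative_real_field)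
  then have "trigP' N f x = (\<Sum>j<N. f j * (exp (2 * \<i> * of_real pi * of_nat j * of_real x) * (2 * \<i> * of_real pi * of_nat j)))"
    unfolding trigP'_def by (rule vector_derivative_at)
  also have "\<dots> = 2 * \<i> * of_real pi * (\<Sum>j<N. of_nat j * f j * ew x ^ j)"
    unfolding exp_pow sum_distrib_left by (rule sum.cong) (simp_all add: algebra_simps)
  finally show ?thesis unfolding PP_def poly_sum poly_monom .
qed

lemma cmod_ew: "cmod (ew x) = 1"
  unfolding ew_def by (simp add: norm_exp_eq_Re)

lemma poly_PTP:
  assumes "degree p \<le> M"
  shows "poly (p * TT M p) (ew x) = ew x ^ M * of_real ((cmod (poly p (ew x)))^2)"
  unfolding complex_norm_square using poly_TT[OF assms cmod_ew] by simp


lemma ew_inj: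
  assumes "0 \<le> a" "a < 1" "0 \<le> b" "b < 1" "ew a = ew b"
  shows "a = b"
proof -
  obtain n :: int where n: "2 * \<i> * of_real pi * of_real a = 2 * \<i> * of_real pi * of_real b + (of_int (2 * n) * pi) * \<i>"
    using assms(5) unfolding ew_def exp_eq by blast
  have "Im (2 * \<i> * of_real pi * of_real a) = Im (2 * \<i> * of_real pi * of_real b + (of_int (2 * n) * pi) * \<i>)"
    using n by simp
  then have "2 * pi * a = 2 * pi * b + 2 * n * pi" by simp
  then have "pi * (a - (b + n)) = 0" by (simp add: algebra_simps)
  then have "a = b + n" by simp
  then have "n = 0" using assms(1-4) by linarith
  then show ?thesis using \<open>a = b + n\<close> by simp
qed

lemma interp:
  fixes P Q :: "complex poly" and M :: nat
  assumes "degree P \<le> 2 * M" "degree Q \<le> 2 * M"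
    and "\<And>k. k \<le> 2 * M \<Longrightarrow> poly P (ew (real k / real (2 * M + 1))) = poly Q (ew (real k / real (2 * M + 1)))"
  shows "P = Q"
proof -
  define w where "w k = ew (real k / real (2 * M + 1))" for k
  have inj: "inj_on w {..2 * M}"
  proof (rule inj_onI)
    fix k l assume k: "k \<in> {..2 * M}" and l: "l \<in> {..2 * M}" and e: "w k = w l"
    have "real k / real (2 * M + 1) = real l / real (2 * M + 1)"
      by (rule ew_inj) (use k l e in \<open>auto simp: w_def divide_simps\<close>)
    then show "k = l" by (simp add: divide_simps)
  qed
  have "card (w ` {..2 * M}) = 2 * M + 1" using card_image[OF inj] by simp
  then show ?thesis
    by (intro poly_eqI_degree[of "w ` {..2 * M}"]) (use assms in \<open>auto simp: w_def\<close>)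
qed


theorem mainTheorem9:
  fixes N :: nat and \<phi> \<psi> :: "nat \<Rightarrow> complex"
  assumes "N \<ge> 1"
    and "\<And>k. k \<le> 2 * N - 2 \<Longrightarrow>
           cmod (trigP N \<phi> (real k / real (2 * N - 1))) = cmod (trigP N \<psi> (real k / real (2 * N - 1)))"
    and "\<And>k. k \<le> 2 * N - 2 \<Longrightarrow>
           cmod (trigP' N \<phi> (real k / real (2 * N - 1))) = cmod (trigP' N \<psi> (real k / real (2 * N - 1)))"
  shows "\<exists>c::complex. cmod c = 1 \<and> (\<forall>j<N. \<psi> j = c * \<phi> j)"
proof -
  define M where "M = N - 1"
  have NM: "2 * N - 2 = 2 * M" "2 * N - 1 = 2 * M + 1" "N - 1 = M" using assms(1) by (auto simp: M_def)
  define p where "p = PP N \<phi>"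
  define q where "q = PP N \<psi>"
  have dp: "degree p \<le> M" using degree_PP[of N \<phi>] by (simp add: p_def M_def)
  have dq: "degree q \<le> M" using degree_PP[of N \<psi>] by (simp add: q_def M_def)
  have rr: "PP N (\<lambda>j. of_nat j * \<phi> j) = pCons 0 (pderiv p)" by (simp add: p_def PP_deriv)
  have ss: "PP N (\<lambda>j. of_nat j * \<psi> j) = pCons 0 (pderiv q)" by (simp add: q_def PP_deriv)
  have dr: "degree (pCons 0 (pderiv p)) \<le> M" using degree_PP[of N "\<lambda>j. of_nat j * \<phi> j"] by (simp add: rr M_def)
  have ds: "degree (pCons 0 (pderiv q)) \<le> M" using degree_PP[of N "\<lambda>j. of_nat j * \<psi> j"] by (simp add: ss M_def)
  have dTT: "degree (f * TT M f) \<le> 2 * M" if "degree f \<le> M" for f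
    using degree_mult_le[of f "TT M f"] degree_TT[of M f] that by linarith
  have E1: "p * TT M p = q * TT M q"
  proof (rule interp[OF dTT[OF dp] dTT[OF dq]])
    fix k assume k: "k \<le> 2 * M"
    show "poly (p * TT M p) (ew (real k / real (2 * M + 1))) = poly (q * TT M q) (ew (real k / real (2 * M + 1)))"
    proof -
      have "cmod (trigP N \<phi> (real k / real (2 * M + 1))) = cmod (trigP N \<psi> (real k / real (2 * M + 1)))"
        using assms(2)[of k] k unfolding NM by simp
      then show ?thesis by (simp only: poly_PTP[OF dp] poly_PTP[OF dq]) (simp add: trigP_poly p_def q_def)
    qed
  qed
  have E2: "pCons 0 (pderiv p) * TT M (pCons 0 (pderiv p)) = pCons 0 (pderiv q) * TT M (pCons 0 (pderiv q))"
  proof (rule interp[OF dTT[OF dr] dTT[OF ds]])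
    fix k assume k: "k \<le> 2 * M"
    have "cmod (2 * \<i> * of_real pi * poly (pCons 0 (pderiv p)) (ew (real k / real (2 * M + 1))))
        = cmod (2 * \<i> * of_real pi * poly (pCons 0 (pderiv q)) (ew (real k / real (2 * M + 1))))"
      using assms(3)[of k] k unfolding NM trigP'_poly rr ss by simp
    then have "cmod (poly (pCons 0 (pderiv p)) (ew (real k / real (2 * M + 1))))
        = cmod (poly (pCons 0 (pderiv q)) (ew (real k / real (2 * M + 1))))"
      by (simp add: norm_mult del: poly_pCons)
    then show "poly (pCons 0 (pderiv p) * TT M (pCons 0 (pderiv p))) (ew (real k / real (2 * M + 1)))
        = poly (pCons 0 (pderiv q) * TT M (pCons 0 (pderiv q))) (ew (real k / real (2 * M + 1)))"
      by (simp only: poly_PTP[OF dr] poly_PTP[OF ds])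
  qed
  obtain c where c: "cmod c = 1" "q = smult c p" using alg[OF dp dq E1 E2] by blast
  have "\<psi> j = c * \<phi> j" if "j < N" for j
    using arg_cong[OF c(2), of "\<lambda>f. coeff f j"] that by (simp add: p_def q_def coeff_PP)
  then show ?thesis using c(1) by blast
qed

end
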